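(* Let $q$ be a prime power and $m \ge 2$ an integer, and let $g = \gcd(q-1, m(m-1))$. For any partition $\lambda$ of $m$ such that $S_{\lambda,\mathbb{F}_q}$ is nonempty, $|D_{\lambda,\mathbb{F}_q}| \ge \frac{q-1}{g}$.
   Context: For a partition $\lambda = (\lambda_1,\dots,\lambda_k)$ of $m$ (positive integers summing to $m$), a monic $f \in \mathbb{F}_q[x]$ of degree $m$ has factorization type $\lambda$ if $f = \pi_1\cdots\pi_k$ with the $\pi_i$ distinct monic irreducible polynomials and $\deg \pi_i = \lambda_i$. $S_{\lambda,\mathbb{F}_q}$ is the set of monic squarefree polynomials in $\mathbb{F}_q[x]$ of factorization type $\lambda$, and $D_{\lambda,\mathbb{F}_q} = \{\operatorname{disc}(f) : f \in S_{\lambda,\mathbb{F}_q}\}$. For $f$ of degree $m\ge 2$ with leading coefficient $a_m$ and roots $\alpha_i$ in a splitting field, $\operatorname{disc}(f) = a_m^{2m-2}\prod_{i<j}(\alpha_i-\alpha_j)^2$. *)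

theory Defs
  imports "Subresultants.Resultant_Prelim" "HOL-Computational_Algebra.Squarefree"
    "HOL-Library.Multiset"
begin

definition is_partition :: "nat multiset \<Rightarrow> nat \<Rightarrow> bool" where
  "is_partition lam m \<longleftrightarrow> (\<forall>k \<in># lam. k > 0) \<and> sum_mset lam = m"

definition has_fact_type :: "'a::field poly \<Rightarrow> nat multiset \<Rightarrow> bool" where
  "has_fact_type f lam \<longleftrightarrow>
     (\<exists>P. finite P \<and> (\<forall>p\<in>P. monic p \<and> irreducible p) \<and> f = (\<Prod>p\<in>P. p)
          \<and> image_mset degree (mset_set P) = lam)"

definition S_set :: "nat multiset \<Rightarrow> 'a::field poly set" where
  "S_set lam = {f. monic f \<and> degree f = sum_mset lam \<and> squarefree f \<and> has_fact_type f lam}"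

text \<open>Discriminant of f of degree m \<ge> 2: (-1)^(m(m-1)/2) Res_{m,m-1}(f,f') / a_m,
  where Res_{m,m-1} is the Sylvester resultant with f' taken of formal degree m-1.
  This equals a_m^(2m-2) prod_{i<j} (alpha_i - alpha_j)^2.\<close>
definition disc :: "'a::field poly \<Rightarrow> 'a" where
  "disc f = (let m = degree f in
     (-1) ^ (m * (m - 1) div 2) * resultant_sub m (m - 1) f (pderiv f) / lead_coeff f)"

definition D_set :: "nat multiset \<Rightarrow> 'a::field set" where
  "D_set lam = disc ` (S_set lam :: 'a poly set)"

end

theory Submission
  imports Defs "HOL-Computational_Algebra.Polynomial_Factorial"
begin


lemma fermat_ff:
  fixes u :: "'a::{finite,field}"
  assumes "u \<noteq> 0"
  shows "u ^ (card (UNIV::'a set) - 1) = 1"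
proof -
  let ?H = "UNIV - {0::'a}"
  have fin: "finite ?H" by simp
  have cardH: "card ?H = card (UNIV::'a set) - 1" by (simp add: card_Diff_subset)
  have bij: "bij_betw (\<lambda>x. u * x) ?H ?H"
  proof (rule bij_betwI[where g="\<lambda>x. inverse u * x"])
  qed (use assms in auto)
  have "(\<Prod>x\<in>?H. u * x) = (\<Prod>x\<in>?H. x)"
    using prod.reindex_bij_betw[OF bij, of "\<lambda>x. x"] by simp
  moreover have "(\<Prod>x\<in>?H. u * x) = u ^ card ?H * (\<Prod>x\<in>?H. x)"
    by (simp add: prod.distrib)
  moreover have "(\<Prod>x\<in>?H. x) \<noteq> 0" by simp
  ultimately show ?thesis using cardH by simp
qed

lemma roots_unity_card:
  fixes g :: nat
  assumes "g > 0"
  shows "card {u::'a::{finite,field}. u ^ g = 1} \<le> g"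
proof -
  let ?p = "monom (1::'a) g - 1"
  have c: "coeff ?p g = 1" using assms by (simp add: coeff_monom)
  hence nz: "?p \<noteq> 0" by (metis coeff_0 zero_neq_one)
  have dg: "degree ?p = g"
  proof (rule antisym)
    show "degree ?p \<le> g" by (rule degree_diff_le) (auto simp: degree_monom_le)
    show "g \<le> degree ?p" using c by (intro le_degree) simp
  qed
  have "{u::'a. u ^ g = 1} = {x. poly ?p x = 0}" by (auto simp: poly_monom)
  moreover have "card {x. poly ?p x = 0} \<le> degree ?p" by (rule card_poly_roots_bound) (rule nz)
  ultimately show ?thesis using dg by simp
qed

lemma pow_gcd_one:
  fixes u :: "'a::{finite,field}"
  assumes "u \<noteq> 0" "u ^ k = 1"
  shows "u ^ gcd (card (UNIV::'a set) - 1) k = 1"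
proof -
  let ?q = "card (UNIV::'a set) - 1"
  have "card (UNIV::'a set) \<ge> card {0::'a, 1}" by (rule card_mono) auto
  hence q0: "?q \<noteq> 0" by simp
  from bezout_nat[OF q0, of k] obtain x y where xy: "?q * x = k * y + gcd ?q k" by blast
  have "1 = (u ^ ?q) ^ x" using fermat_ff[OF assms(1)] by simp
  also have "\<dots> = (u ^ k) ^ y * u ^ gcd ?q k" by (metis power_mult power_add xy)
  also have "\<dots> = u ^ gcd ?q k" using assms(2) by simp
  finally show ?thesis by simp
qed

lemma card_powers:
  fixes k :: nat
  shows "card (UNIV::'a::{finite,field} set) - 1
     \<le> card ((\<lambda>c. c ^ k) ` (UNIV - {0::'a})) * gcd (card (UNIV::'a set) - 1) k"
proof -
  let ?q = "card (UNIV::'a set) - 1"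
  let ?g = "gcd ?q k"
  let ?H = "UNIV - {0::'a}"
  let ?I = "(\<lambda>c. c ^ k) ` ?H"
  have "card (UNIV::'a set) \<ge> card {0::'a, 1}" by (rule card_mono) auto
  hence q0: "?q \<noteq> 0" by simp
  hence g0: "?g > 0" by simp
  have cardH: "card ?H = ?q" by (simp add: card_Diff_subset)
  have fib: "card {c \<in> ?H. c ^ k = y} \<le> ?g" if "y \<in> ?I" for y
  proof -
    from that obtain c0 where c0: "c0 \<noteq> 0" "y = c0 ^ k" by auto
    have "inj_on (\<lambda>c. c * inverse c0) {c \<in> ?H. c ^ k = y}"
      using c0 by (auto simp: inj_on_def)
    moreover have "(\<lambda>c. c * inverse c0) ` {c \<in> ?H. c ^ k = y} \<subseteq> {u. u ^ ?g = 1}"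
    proof (rule image_subsetI)
      fix c :: 'a assume cH: "c \<in> {c \<in> ?H. c ^ k = y}"
      have "(c * inverse c0) ^ ?g = 1"
      proof (rule pow_gcd_one)
        show "c * inverse c0 \<noteq> 0" using cH c0 by simp
        show "(c * inverse c0) ^ k = 1" using cH c0
          by (simp add: power_mult_distrib power_inverse)
      qed
      thus "c * inverse c0 \<in> {u. u ^ ?g = 1}" by simp
    qed
    ultimately have "card {c \<in> ?H. c ^ k = y} \<le> card {u::'a. u ^ ?g = 1}"
      by (metis (no_types, lifting) card_image card_mono finite)
    also have "\<dots> \<le> ?g" by (rule roots_unity_card[OF g0])
    finally show ?thesis .
  qed
  have eqH: "?H = (\<Union>y\<in>?I. {c \<in> ?H. c ^ k = y})" by auto
  have "card ?H \<le> (\<Sum>y\<in>?I. card {c \<in> ?H. c ^ k = y})"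
    by (subst eqH) (rule card_UN_le, simp)
  also have "\<dots> \<le> (\<Sum>y\<in>?I. ?g)" by (rule sum_mono) (rule fib)
  also have "\<dots> = card ?I * ?g" by simp
  finally show ?thesis using cardH by simp
qed



lemma det_scale_rows_cols:
  fixes A :: "'a::comm_ring_1 mat"
  assumes A: "A \<in> carrier_mat n n"
  shows "det (mat n n (\<lambda>(i,j). r i * A $$ (i,j) * s j)) = (\<Prod>i=0..<n. r i * s i) * det A"
proof -
  let ?B = "mat n n (\<lambda>(i,j). r i * A $$ (i,j) * s j)"
  have B: "?B \<in> carrier_mat n n" by simp
  have "det ?B = (\<Sum>p\<in>{p. p permutes {0..<n}}. signof p * (\<Prod>i=0..<n. ?B $$ (i, p i)))"
    by (rule det_def'[OF B])
  also have "\<dots> = (\<Sum>p\<in>{p. p permutes {0..<n}}. (\<Prod>i=0..<n. r i * s i) * (signof p * (\<Prod>i=0..<n. A $$ (i, p i))))"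
  proof (rule sum.cong[OF refl])
    fix p assume "p \<in> {p. p permutes {0..<n}}"
    hence p: "p permutes {0..<n}" by simp
    have pi: "p i < n" if "i < n" for i using permutes_in_image[OF p] that by auto
    have "(\<Prod>i=0..<n. ?B $$ (i, p i)) = (\<Prod>i=0..<n. r i * A $$ (i, p i) * s (p i))"
      by (rule prod.cong) (auto simp: pi)
    also have "\<dots> = (\<Prod>i=0..<n. r i) * (\<Prod>i=0..<n. s (p i)) * (\<Prod>i=0..<n. A $$ (i, p i))"
      by (simp add: prod.distrib ac_simps)
    also have "(\<Prod>i=0..<n. s (p i)) = (\<Prod>i=0..<n. s i)"
      using prod.permute[OF p, of s] by (simp add: comp_def)
    finally show "signof p * (\<Prod>i=0..<n. ?B $$ (i, p i)) = (\<Prod>i=0..<n. r i * s i) * (signof p * (\<Prod>i=0..<n. A $$ (i, p i)))"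
      by (simp add: prod.distrib ac_simps)
  qed
  also have "\<dots> = (\<Prod>i=0..<n. r i * s i) * det A"
    by (simp add: det_def'[OF A] sum_distrib_left)
  finally show ?thesis .
qed



lemma coeff_pcompose_lin: "coeff (pcompose (p::'a::field poly) [:0, d:]) k = d ^ k * coeff p k"
proof (induction p arbitrary: k rule: pCons_induct)
  case 0 thus ?case by simp
next
  case (pCons a p)
  show ?case
  proof (cases k)
    case 0 thus ?thesis by (simp add: pcompose_pCons)
  next
    case (Suc k') thus ?thesis using pCons.IH by (simp add: pcompose_pCons)
  qed
qed

definition sc :: "'a::field \<Rightarrow> 'a poly \<Rightarrow> 'a poly" where
  "sc c p = smult (c ^ degree p) (pcompose p [:0, inverse c:])"

lemma coeff_sc: "coeff (sc c p) k = c ^ degree p * inverse c ^ k * coeff p k"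
  by (simp add: sc_def coeff_pcompose_lin)

lemma degree_sc: assumes "(c::'a::field) \<noteq> 0" shows "degree (sc c p) = degree p"
  using assms by (simp add: sc_def degree_pcompose)

lemma lead_sc: assumes "(c::'a::field) \<noteq> 0" shows "lead_coeff (sc c p) = lead_coeff p"
  using assms by (simp add: degree_sc coeff_sc power_inverse field_simps)

lemma coeff_pderiv_sc: "coeff (pderiv (sc c p)) k = c ^ degree p * inverse c ^ Suc k * coeff (pderiv p) k"
  by (simp add: coeff_pderiv coeff_sc)

lemma inv_pow_diff:
  assumes "(c::'a::field) \<noteq> 0" "j \<le> e"
  shows "inverse c ^ (e - j) = inverse c ^ e * c ^ j"
proof -
  have "inverse c ^ e = inverse c ^ (e - j) * inverse c ^ j" using assms(2)
    by (simp add: power_add[symmetric])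
  thus ?thesis using assms(1) by (simp add: power_inverse field_simps)
qed

lemma disc_sc:
  fixes f :: "'a::field poly"
  assumes c: "c \<noteq> 0" and m: "degree f = m" "m \<ge> 2" and mon: "monic f"
  shows "disc (sc c f) = c ^ (m * (m - 1)) * disc f"
proof -
  define n where "n = m - 1"
  define d where "d = inverse c"
  define r where "r i = c ^ m * d ^ (if i < n then m + i else Suc i)" for i
  define s where "s j = c ^ j" for j
  let ?M = "sylvester_mat_sub m n f (pderiv f)"
  let ?M' = "sylvester_mat_sub m n (sc c f) (pderiv (sc c f))"
  have dc: "d * c = 1" using c by (simp add: d_def)
  have M': "?M' = mat (m+n) (m+n) (\<lambda>(i,j). r i * ?M $$ (i,j) * s j)"
  proof (rule eq_matI)
    fix i j assume "i < dim_row (mat (m+n) (m+n) (\<lambda>(i,j). r i * ?M $$ (i,j) * s j))"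
      "j < dim_col (mat (m+n) (m+n) (\<lambda>(i,j). r i * ?M $$ (i,j) * s j))"
    hence ij: "i < m + n" "j < m + n" by auto
    show "?M' $$ (i,j) = mat (m+n) (m+n) (\<lambda>(i,j). r i * ?M $$ (i,j) * s j) $$ (i,j)"
    proof (cases "i < n")
      case True
      have ipd: "d ^ (i + m - j) = c ^ j * d ^ (i + m)" if "i \<le> j" "j - i \<le> m"
        using inv_pow_diff[OF c, of j "i+m"] that by (simp add: d_def mult.commute)
      show ?thesis using True ij ipd
        by (auto simp: sylvester_mat_sub_index coeff_sc m(1) r_def s_def d_def[symmetric]
              inv_pow_diff[OF c] ac_simps)
    next
      case False
      have ipd: "d ^ (i - j) = c ^ j * d ^ i" if "j \<le> i" for i
        using inv_pow_diff[OF c that] by (simp add: d_def mult.commute)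
      show ?thesis using False ij ipd
        by (auto simp: sylvester_mat_sub_index coeff_pderiv_sc m(1) r_def s_def d_def[symmetric]
              inv_pow_diff[OF c] Suc_diff_le[symmetric] ac_simps simp del: power_Suc)
    qed
  qed auto
  have prodrs: "(\<Prod>i=0..<m+n. r i * s i) = (c ^ (m - 1)) ^ m"
  proof -
    have "(\<Prod>i=0..<m+n. r i * s i) = (\<Prod>i=0..<n. r i * s i) * (\<Prod>i=n..<m+n. r i * s i)"
      by (simp add: prod.atLeastLessThan_concat)
    also have "(\<Prod>i=0..<n. r i * s i) = 1"
    proof (rule prod.neutral, clarify)
      fix i assume "i \<in> {0..<n}"
      hence "r i * s i = (c * d) ^ (m + i)" by (simp add: r_def s_def power_mult_distrib power_add)
      thus "r i * s i = 1" using dc by (simp add: mult.commute)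
    qed
    also have "(\<Prod>i=n..<m+n. r i * s i) = (\<Prod>i=n..<m+n. c ^ (m - 1))"
    proof (rule prod.cong[OF refl])
      fix i assume "i \<in> {n..<m+n}"
      hence "r i * s i = c ^ m * d * (c * d) ^ i" by (simp add: r_def s_def power_mult_distrib)
      also have "\<dots> = c ^ (m - 1)" using dc m(2) c
        by (simp add: mult.commute d_def power_diff divide_inverse)
      finally show "r i * s i = c ^ (m - 1)" .
    qed
    also have "\<dots> = (c ^ (m - 1)) ^ m" by simp
    finally show ?thesis by simp
  qed
  have "resultant_sub m n (sc c f) (pderiv (sc c f)) = (c ^ (m - 1)) ^ m * resultant_sub m n f (pderiv f)"
    unfolding resultant_sub_def M' by (subst det_scale_rows_cols[of _ "m+n"]) (auto simp: prodrs)
  moreover have "coeff (sc c f) m = 1" using lead_sc[OF c, of f] degree_sc[OF c, of f] m mon by simp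
  ultimately show ?thesis using c m mon
    by (simp add: disc_def Let_def degree_sc lead_sc n_def power_mult[symmetric] mult.commute)
qed



lemma sc_0 [simp]: "sc c 0 = 0" by (simp add: sc_def)
lemma sc_1 [simp]: "sc c 1 = 1" by (simp add: sc_def)

lemma sc_eq_0_iff: assumes "(c::'a::field) \<noteq> 0" shows "sc c p = 0 \<longleftrightarrow> p = 0"
  using assms by (metis degree_sc lead_sc leading_coeff_0_iff)

lemma sc_mult: assumes "(c::'a::field) \<noteq> 0" shows "sc c (p * q) = sc c p * sc c q"
proof (cases "p = 0 \<or> q = 0")
  case True thus ?thesis by auto
next
  case False
  hence "degree (p * q) = degree p + degree q" by (simp add: degree_mult_eq)
  hence "sc c (p * q) = smult (c ^ degree p * c ^ degree q) (pcompose p [:0, inverse c:] * pcompose q [:0, inverse c:])"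
    by (simp add: sc_def pcompose_mult power_add)
  also have "\<dots> = sc c p * sc c q" by (simp add: sc_def mult.commute)
  finally show ?thesis .
qed

lemma sc_prod: assumes "(c::'a::field) \<noteq> 0" shows "sc c (prod f A) = (\<Prod>x\<in>A. sc c (f x))"
proof (induction A rule: infinite_finite_induct)
  case (insert x F) thus ?case by (simp add: sc_mult[OF assms])
qed auto

lemma sc_sc: assumes "(c::'a::field) \<noteq> 0" shows "sc (inverse c) (sc c p) = p"
proof -
  have L: "pcompose [:0, inverse c:] [:0, inverse (inverse c):] = [:0, 1:]"
    using assms by (simp add: pcompose_pCons)
  have "sc (inverse c) (sc c p) = smult (inverse c ^ degree p) (pcompose (sc c p) [:0, inverse (inverse c):])"
    unfolding sc_def[of "inverse c"] degree_sc[OF assms] ..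
  also have "\<dots> = smult (inverse c ^ degree p) (smult (c ^ degree p)
        (pcompose (pcompose p [:0, inverse c:]) [:0, inverse (inverse c):]))"
    by (simp add: sc_def pcompose_smult)
  also have "\<dots> = smult (inverse c ^ degree p * c ^ degree p) p"
    using assms by (simp add: pcompose_assoc[symmetric] pcompose_pCons)
  also have "inverse c ^ degree p * c ^ degree p = 1" using assms
    by (simp add: power_mult_distrib[symmetric])
  finally show ?thesis by simp
qed

lemma sc_unit_iff: assumes "(c::'a::field) \<noteq> 0" shows "is_unit (sc c p) \<longleftrightarrow> is_unit p"
proof (cases "p = 0")
  case False
  hence "sc c p \<noteq> 0" using sc_eq_0_iff[OF assms] by simp
  thus ?thesis using False is_unit_iff_degree degree_sc[OF assms] by metis
qed simp

lemma sc_irreducible: assumes c: "(c::'a::field) \<noteq> 0" and p: "irreducible p"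
  shows "irreducible (sc c p)"
proof (rule irreducibleI)
  have c': "inverse c \<noteq> 0" using c by simp
  show "sc c p \<noteq> 0" using p c by (auto simp: sc_eq_0_iff)
  show "\<not> is_unit (sc c p)" using sc_unit_iff[OF c, of p] irreducible_not_unit[OF p] by blast
  fix a b assume ab: "sc c p = a * b"
  have "p = sc (inverse c) (sc c p)" by (rule sc_sc[OF c, symmetric])
  also have "\<dots> = sc (inverse c) (a * b)" by (simp only: ab)
  also have "\<dots> = sc (inverse c) a * sc (inverse c) b" by (rule sc_mult[OF c'])
  finally have "p = sc (inverse c) a * sc (inverse c) b" .
  hence "is_unit (sc (inverse c) a) \<or> is_unit (sc (inverse c) b)" using p irreducibleD by blast
  thus "is_unit a \<or> is_unit b" using sc_unit_iff[OF c'] by blast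
qed

lemma sc_squarefree: assumes c: "(c::'a::field) \<noteq> 0" and f: "squarefree f"
  shows "squarefree (sc c f)"
proof (rule squarefreeI)
  have c': "inverse c \<noteq> 0" using c by simp
  fix x assume "x ^ 2 dvd sc c f"
  hence "x * x dvd sc c f" by (simp only: power2_eq_square)
  then obtain k where "sc c f = x * x * k" unfolding dvd_def by auto
  have "f = sc (inverse c) (sc c f)" by (rule sc_sc[OF c, symmetric])
  also have "\<dots> = sc (inverse c) (x * x * k)" by (simp only: \<open>sc c f = x * x * k\<close>)
  also have "\<dots> = sc (inverse c) x * sc (inverse c) x * sc (inverse c) k" by (simp only: sc_mult[OF c'])
  finally have "f = sc (inverse c) x * sc (inverse c) x * sc (inverse c) k" .
  hence "sc (inverse c) x * sc (inverse c) x dvd f" by (metis dvd_triv_left)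
  hence "(sc (inverse c) x) ^ 2 dvd f" by (simp only: power2_eq_square)
  hence "is_unit (sc (inverse c) x)" by (rule squarefreeD[OF f])
  thus "is_unit x" using sc_unit_iff[OF c'] by blast
qed

lemma sc_monic: assumes c: "(c::'a::field) \<noteq> 0" and "monic p" shows "monic (sc c p)"
  using assms by (simp add: lead_sc)

lemma sc_inj: assumes c: "(c::'a::field) \<noteq> 0" shows "inj (sc c)"
  by (rule inj_on_inverseI[where g="sc (inverse c)"]) (use sc_sc[OF c] in auto)

lemma sc_S_set: assumes c: "(c::'a::field) \<noteq> 0" and f: "f \<in> S_set lam"
  shows "sc c f \<in> S_set lam"
proof -
  from f obtain P where P: "finite P" "\<forall>p\<in>P. monic p \<and> irreducible p" "f = (\<Prod>p\<in>P. p)"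
      "image_mset degree (mset_set P) = lam"
    unfolding S_set_def has_fact_type_def by auto
  have "has_fact_type (sc c f) lam" unfolding has_fact_type_def
  proof (intro exI[of _ "sc c ` P"] conjI ballI)
    show "finite (sc c ` P)" using P by simp
    fix q assume "q \<in> sc c ` P"
    then obtain p where "p \<in> P" "q = sc c p" by auto
    thus "monic q" "irreducible q" using P(2) sc_monic[OF c] sc_irreducible[OF c] by auto
  next
    have inj: "inj_on (sc c) P" using inj_on_subset[OF sc_inj[OF c] subset_UNIV] .
    show "sc c f = prod (\<lambda>p. p) (sc c ` P)"
      using P(3) by (simp add: prod.reindex[OF inj] sc_prod[OF c])
    have "image_mset degree (mset_set (sc c ` P)) = image_mset degree (image_mset (sc c) (mset_set P))"
      by (simp add: image_mset_mset_set[OF inj])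
    also have "\<dots> = image_mset degree (mset_set P)"
      by (simp add: multiset.map_comp comp_def degree_sc[OF c])
    finally show "image_mset degree (mset_set (sc c ` P)) = lam" using P(4) by simp
  qed
  moreover have "monic (sc c f)" using f sc_monic[OF c] unfolding S_set_def by auto
  moreover have "squarefree (sc c f)" using f sc_squarefree[OF c] unfolding S_set_def by auto
  moreover have "degree (sc c f) = degree f" by (rule degree_sc[OF c])
  ultimately show ?thesis using f unfolding S_set_def by simp
qed



lemma prime_divisor_ex:
  fixes p :: "'a::field poly"
  assumes "p \<noteq> 0" "\<not> is_unit p"
  obtains q where "prime_elem q" "q dvd p"
proof -
  obtain F where pr: "prod_mset F = smult (inverse (lead_coeff p)) p"
      and Fp: "\<And>q. q \<in># F \<Longrightarrow> prime_elem q"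
    using field_poly_prod_mset_prime_factorization[OF assms(1)] field_poly_in_prime_factorization_imp_prime
    by blast
  let ?F = F
  have "?F \<noteq> {#}"
  proof
    assume "?F = {#}"
    hence "smult (inverse (lead_coeff p)) p = 1" using pr by simp
    hence "p = [:lead_coeff p:]" using assms(1)
      by (metis smult_1_left smult_smult right_inverse leading_coeff_0_iff mult.commute smult_one
          smult_pCons pCons_one)
    hence "is_unit p" using assms(1)
      by (metis is_unit_iff_degree degree_pCons_0)
    with assms(2) show False by simp
  qed
  then obtain q where q: "q \<in># ?F" by blast
  have "prime_elem q" by (rule Fp[OF q])
  moreover have "q dvd p"
  proof -
    have "q dvd smult (inverse (lead_coeff p)) p" using dvd_prod_mset[OF q] pr by simp
    thus ?thesis by (metis dvd_smult_cancel inverse_eq_divide leading_coeff_0_iff assms(1)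
        inverse_nonzero_iff_nonzero)
  qed
  ultimately show ?thesis using that by blast
qed

lemma coprime_dvd_mult_fp:
  fixes f g b :: "'a::field poly"
  assumes "coprime f g" "f dvd b * g"
  shows "f dvd b"
  using assms
proof (induction "degree f" arbitrary: f b rule: less_induct)
  case less
  show ?case
  proof (cases "f = 0")
    case True
    have "g \<noteq> 0"
    proof
      assume "g = 0"
      hence "is_unit (0::'a poly)" using less.prems(1) True coprime_common_divisor by blast
      thus False by simp
    qed
    thus ?thesis using less.prems(2) True by simp
  next
    case f0: False
    show ?thesis
    proof (cases "is_unit f")
      case True thus ?thesis by (rule unit_imp_dvd)
    next
      case False
      obtain q where q: "prime_elem q" "q dvd f" using prime_divisor_ex[OF f0 False] by blast
      then obtain f1 where f1: "f = q * f1" by (auto elim: dvdE)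
      have qb: "q dvd b * g" using q(2) less.prems(2) by (rule dvd_trans)
      have "\<not> q dvd g"
      proof
        assume "q dvd g"
        hence "is_unit q" using less.prems(1) q(2) coprime_common_divisor by blast
        thus False using q(1) prime_elem_not_unit by blast
      qed
      hence "q dvd b" using qb q(1) prime_elem_dvd_mult_iff by blast
      then obtain b1 where b1: "b = q * b1" unfolding dvd_def by blast
      have q0: "q \<noteq> 0" using q(1) by auto
      have "q * f1 dvd q * (b1 * g)" using less.prems(2) f1 b1 by (simp add: mult.assoc)
      hence d: "f1 dvd b1 * g" using q0 by simp
      have dq: "degree q > 0" using q(1) q0 is_unit_iff_degree prime_elem_not_unit by blast
      have f10: "f1 \<noteq> 0" using f0 f1 by auto
      have "degree f = degree q + degree f1" using f1 q0 f10 by (simp add: degree_mult_eq)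
      hence lt: "degree f1 < degree f" using dq by simp
      have cop: "coprime f1 g"
      proof (rule coprimeI)
        fix c assume "c dvd f1" "c dvd g"
        hence "c dvd f" using f1 by simp
        thus "is_unit c" using \<open>c dvd g\<close> less.prems(1) coprime_common_divisor by blast
      qed
      have "f1 dvd b1" using less.hyps[OF lt cop d] .
      thus ?thesis using f1 b1 by simp
    qed
  qed
qed



lemma coeff_monom_mult_f: "coeff (monom (1::'a::field) d * p) k = (if d \<le> k then coeff p (k - d) else 0)"
  by (simp add: coeff_monom_mult)

lemma resultant_sub_nonzero:
  fixes f g :: "'a::field poly"
  assumes df: "degree f = m" and m0: "m > 0" and dg: "degree g \<le> n" and cop: "coprime f g"
  shows "resultant_sub m n f g \<noteq> 0"
proof
  assume "resultant_sub m n f g = 0"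
  define N where "N = m + n"
  let ?M = "sylvester_mat_sub m n f g"
  have MC: "?M \<in> carrier_mat N N" unfolding N_def by (rule sylvester_mat_sub_carrier)
  have "det (transpose_mat ?M) = 0" using \<open>resultant_sub m n f g = 0\<close>
    by (simp add: resultant_sub_def det_transpose[OF MC])
  then obtain v where v: "v \<in> carrier_vec N" "v \<noteq> 0\<^sub>v N" "transpose_mat ?M *\<^sub>v v = 0\<^sub>v N"
    using det_0_iff_vec_prod_zero_field[of "transpose_mat ?M" N] MC by auto
  have dimv: "dim_vec v = N" using v(1) by simp
  have kerj: "(\<Sum>i=0..<N. ?M $$ (i,j) * v $ i) = 0" if j: "j < N" for j
  proof -
    have "(transpose_mat ?M *\<^sub>v v) $ j = 0" using v(3) j by simp
    moreover have "(transpose_mat ?M *\<^sub>v v) $ j = col ?M j \<bullet> v" using j by (simp add: N_def)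
    ultimately show ?thesis using j MC by (simp add: scalar_prod_def dimv N_def)
  qed
  define a where "a = (\<Sum>i<n. monom (v $ i) (n - Suc i))"
  define b where "b = (\<Sum>i<m. monom (v $ (n + i)) (m - Suc i))"
  define P where "P = a * f + b * g"
  have Pexp: "P = (\<Sum>i<n. smult (v $ i) (monom 1 (n - Suc i) * f)) + (\<Sum>i<m. smult (v $ (n + i)) (monom 1 (m - Suc i) * g))"
  proof -
    have h: "smult c (monom 1 d * p) = monom c d * p" for c d and p :: "'a poly"
      by (simp add: mult_smult_left[symmetric] smult_monom)
    show ?thesis by (simp only: h P_def a_def b_def sum_distrib_right)
  qed
  have coeffP: "coeff P k = (\<Sum>i<n. v $ i * (if n - Suc i \<le> k then coeff f (k - (n - Suc i)) else 0))
     + (\<Sum>i<m. v $ (n + i) * (if m - Suc i \<le> k then coeff g (k - (m - Suc i)) else 0))" for k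
    unfolding Pexp by (simp add: coeff_sum coeff_monom_mult_f)
  have P0: "P = 0"
  proof (rule poly_eqI)
    fix k
    show "coeff P k = coeff 0 k"
    proof (cases "k < N")
      case False
      have "coeff f (k - (n - Suc i)) = 0" if "i < n" for i
        using False that df by (intro coeff_eq_0) (simp add: N_def)
      hence A: "(\<Sum>i<n. v $ i * (if n - Suc i \<le> k then coeff f (k - (n - Suc i)) else 0)) = 0"
        by (intro sum.neutral) auto
      have "coeff g (k - (m - Suc i)) = 0" if "i < m" for i
        using False that dg m0 by (intro coeff_eq_0) (simp add: N_def)
      hence B: "(\<Sum>i<m. v $ (n + i) * (if m - Suc i \<le> k then coeff g (k - (m - Suc i)) else 0)) = 0"
        by (intro sum.neutral) auto
      show ?thesis by (simp only: coeffP A B) simp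
    next
      case True
      define j where "j = N - 1 - k"
      have j: "j < N" "k = N - 1 - j" using True by (auto simp: j_def)
      have "(\<Sum>i=0..<N. ?M $$ (i,j) * v $ i)
          = (\<Sum>i=0..<n. ?M $$ (i,j) * v $ i) + (\<Sum>i=n..<N. ?M $$ (i,j) * v $ i)"
        by (simp add: N_def sum.atLeastLessThan_concat)
      also have "(\<Sum>i=n..<N. ?M $$ (i,j) * v $ i) = (\<Sum>i=0..<m. ?M $$ (n + i,j) * v $ (n + i))"
        unfolding N_def using sum.shift_bounds_nat_ivl[of "\<lambda>i. ?M $$ (i,j) * v $ i" 0 n m]
        by (simp add: add.commute)
      also have "(\<Sum>i=0..<n. ?M $$ (i,j) * v $ i) =
          (\<Sum>i<n. v $ i * (if n - Suc i \<le> k then coeff f (k - (n - Suc i)) else 0))"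
        unfolding lessThan_atLeast0
      proof (rule sum.cong[OF refl])
        fix i assume i: "i \<in> {0..<n}"
        have "?M $$ (i,j) = (if n - Suc i \<le> k then coeff f (k - (n - Suc i)) else 0)"
        proof -
          have e: "?M $$ (i,j) = (if i \<le> j \<and> j - i \<le> m then coeff f (m + i - j) else 0)"
            using i j by (simp add: sylvester_mat_sub_index N_def)
          show ?thesis
          proof (cases "i \<le> j")
            case True thus ?thesis unfolding e using i j by (auto simp: N_def intro!: arg_cong[where f="coeff f"])
          next
            case False
            have "coeff f (k - (n - Suc i)) = 0" using False i j df
              by (intro coeff_eq_0) (simp add: N_def)
            thus ?thesis unfolding e using False by simp
          qed
        qed
        thus "?M $$ (i,j) * v $ i = v $ i * (if n - Suc i \<le> k then coeff f (k - (n - Suc i)) else 0)"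
          by simp
      qed
      also have "(\<Sum>i=0..<m. ?M $$ (n + i,j) * v $ (n + i)) =
          (\<Sum>i<m. v $ (n + i) * (if m - Suc i \<le> k then coeff g (k - (m - Suc i)) else 0))"
        unfolding lessThan_atLeast0
      proof (rule sum.cong[OF refl])
        fix i assume i: "i \<in> {0..<m}"
        have "?M $$ (n + i,j) = (if m - Suc i \<le> k then coeff g (k - (m - Suc i)) else 0)"
        proof -
          have e: "?M $$ (n + i,j) = (if i \<le> j \<and> j \<le> n + i then coeff g (n + i - j) else 0)"
            using i j by (simp add: sylvester_mat_sub_index N_def)
          show ?thesis
          proof (cases "i \<le> j")
            case True thus ?thesis unfolding e using i j by (auto simp: N_def intro!: arg_cong[where f="coeff g"])
          next
            case False
            have "coeff g (k - (m - Suc i)) = 0" using False i j dg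
              by (intro coeff_eq_0) (simp add: N_def)
            thus ?thesis unfolding e using False by simp
          qed
        qed
        thus "?M $$ (n + i,j) * v $ (n + i) = v $ (n + i) * (if m - Suc i \<le> k then coeff g (k - (m - Suc i)) else 0)"
          by simp
      qed
      finally show ?thesis using kerj[OF j(1)] by (simp add: coeffP)
    qed
  qed
  have f0: "f \<noteq> 0" using df m0 by auto
  have "f dvd b * g" using P0 unfolding P_def
    by (metis add.inverse_unique dvd_minus_iff dvd_triv_right)
  hence "f dvd b" using cop coprime_dvd_mult_fp by blast
  moreover have "degree b < m"
  proof -
    have "degree b \<le> m - 1" unfolding b_def
      by (rule degree_sum_le) (auto intro: order.trans[OF degree_monom_le])
    thus ?thesis using m0 by simp
  qed
  ultimately have b0: "b = 0" using df by (metis divides_degree leD)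
  hence "a * f = 0" using P0 by (simp add: P_def)
  hence a0: "a = 0" using f0 by simp
  have "v = 0\<^sub>v N"
  proof (rule eq_vecI)
    fix i assume "i < dim_vec (0\<^sub>v N)"
    hence i: "i < N" by simp
    show "v $ i = 0\<^sub>v N $ i"
    proof (cases "i < n")
      case True
      have "coeff a (n - Suc i) = v $ i" unfolding a_def coeff_sum coeff_monom
      proof -
        have "(\<Sum>x<n. if n - Suc x = n - Suc i then v $ x else 0) = (\<Sum>x<n. if x = i then v $ x else 0)"
          using True by (intro sum.cong) auto
        thus "(\<Sum>x<n. if n - Suc x = n - Suc i then v $ x else 0) = v $ i" using True by simp
      qed
      thus ?thesis using a0 i by simp
    next
      case False
      define i' where "i' = i - n"
      have i': "i' < m" "i = n + i'" using i False by (auto simp: i'_def N_def)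
      have "coeff b (m - Suc i') = v $ i" unfolding b_def coeff_sum coeff_monom
      proof -
        have "(\<Sum>x<m. if m - Suc x = m - Suc i' then v $ (n + x) else 0) = (\<Sum>x<m. if x = i' then v $ (n + x) else 0)"
          using i' by (intro sum.cong) auto
        thus "(\<Sum>x<m. if m - Suc x = m - Suc i' then v $ (n + x) else 0) = v $ i" using i' by simp
      qed
      thus ?thesis using b0 i by simp
    qed
  qed (simp add: dimv)
  with v(2) show False by simp
qed



lemma CHAR_prime_ff: "prime CHAR('a::{finite,field})"
  by (rule prime_CHAR_semidom) (rule finite_imp_CHAR_pos, simp)

lemma frob_inj: "inj (\<lambda>x::'a::{finite,field}. x ^ CHAR('a))"
proof (rule injI)
  fix x y :: 'a assume eq: "x ^ CHAR('a) = y ^ CHAR('a)"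
  have "(x + (- y)) ^ CHAR('a) = x ^ CHAR('a) + (- y) ^ CHAR('a)"
    by (rule freshmans_dream[OF CHAR_prime_ff refl])
  also have "(- y) ^ CHAR('a) = - (y ^ CHAR('a))"
    by (rule minus_power_prime_CHAR[OF refl CHAR_prime_ff])
  finally have "(x - y) ^ CHAR('a) = 0" using eq by simp
  thus "x = y" by simp
qed

lemma frob_surj: "\<exists>x::'a::{finite,field}. x ^ CHAR('a) = y"
  using finite_UNIV_inj_surj[OF _ frob_inj] by (metis finite surjD)

lemma pderiv_zero_power:
  fixes g :: "'a::{finite,field} poly"
  assumes "pderiv g = 0"
  shows "\<exists>h. g = h ^ CHAR('a)"
proof -
  define p where "p = CHAR('a)"
  have pp: "prime p" using CHAR_prime_ff p_def by simp
  hence p0: "p > 0" by (simp add: prime_gt_0_nat)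
  define \<rho> where "\<rho> y = (SOME x::'a. x ^ p = y)" for y
  have \<rho>: "\<rho> y ^ p = y" for y unfolding \<rho>_def p_def by (rule someI_ex[OF frob_surj])
  define h where "h = (\<Sum>j\<le>degree g. monom (\<rho> (coeff g (j * p))) j)"
  have dvdk: "p dvd k" if "coeff g k \<noteq> 0" for k
  proof (cases k)
    case (Suc k')
    have "coeff (pderiv g) k' = 0" using assms by simp
    hence "of_nat k * coeff g k = 0" by (simp add: coeff_pderiv Suc)
    hence "of_nat k = (0::'a)" using that by simp
    thus ?thesis by (simp add: of_nat_eq_0_iff_char_dvd p_def)
  qed simp
  have "h ^ p = (\<Sum>j\<le>degree g. monom (\<rho> (coeff g (j * p))) j ^ p)"
    unfolding h_def by (rule freshmans_dream_sum) (simp_all add: p_def CHAR_prime_ff)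
  also have "\<dots> = (\<Sum>j\<le>degree g. monom (coeff g (j * p)) (j * p))"
    by (simp add: monom_power \<rho>)
  also have "\<dots> = g"
  proof (rule poly_eqI)
    fix k
    have "coeff (\<Sum>j\<le>degree g. monom (coeff g (j * p)) (j * p)) k
        = (\<Sum>j\<le>degree g. if j * p = k then coeff g k else 0)"
      by (simp add: coeff_sum coeff_monom) (intro sum.cong, auto)
    also have "\<dots> = coeff g k"
    proof (cases "coeff g k = 0")
      case True show ?thesis by (rule trans[OF sum.neutral]) (simp_all add: True)
    next
      case False
      obtain j where "k = p * j" using dvdk[OF False] unfolding dvd_def by blast
      hence j: "k = j * p" by (simp add: mult.commute)
      have "k \<le> degree g" using False le_degree by blast
      moreover have "j \<le> j * p" using p0 by simp
      ultimately have jd: "j \<le> degree g" using j by linarith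
      have "(\<Sum>j'\<le>degree g. if j' * p = k then coeff g k else 0) = (\<Sum>j'\<le>degree g. if j' = j then coeff g k else 0)"
        using p0 j by (intro sum.cong) auto
      thus ?thesis using jd by simp
    qed
    finally show "coeff (\<Sum>j\<le>degree g. monom (coeff g (j * p)) (j * p)) k = coeff g k" .
  qed
  finally show ?thesis unfolding p_def by metis
qed



lemma squarefree_coprime_pderiv:
  fixes f :: "'a::{finite,field} poly"
  assumes sf: "squarefree f" and f0: "f \<noteq> 0"
  shows "coprime f (pderiv f)"
proof (rule coprimeI, rule ccontr)
  fix c assume cf: "c dvd f" and cf': "c dvd pderiv f" and cu: "\<not> is_unit c"
  have c0: "c \<noteq> 0" using cf f0 by auto
  obtain g where g: "prime_elem g" "g dvd c" using prime_divisor_ex[OF c0 cu] by blast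
  have gf: "g dvd f" using g(2) cf by (rule dvd_trans)
  have gf': "g dvd pderiv f" using g(2) cf' by (rule dvd_trans)
  have g0: "g \<noteq> 0" using g(1) by auto
  have gu: "\<not> is_unit g" using g(1) prime_elem_not_unit by blast
  have dg: "degree g > 0" using g0 gu is_unit_iff_degree by blast
  obtain k where k: "f = g * k" using gf unfolding dvd_def by blast
  have "pderiv f = g * pderiv k + k * pderiv g" unfolding k by (rule pderiv_mult)
  hence "g dvd k * pderiv g" using gf'
    by (metis dvd_add_right_iff dvd_triv_left)
  hence "g dvd k \<or> g dvd pderiv g" using g(1) prime_elem_dvd_mult_iff by blast
  thus False
  proof
    assume "g dvd k"
    then obtain k' where "k = g * k'" unfolding dvd_def by blast
    hence "g ^ 2 dvd f" using k by (simp add: power2_eq_square mult.assoc)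
    hence "is_unit g" using sf squarefreeD by blast
    with gu show False by simp
  next
    assume gd: "g dvd pderiv g"
    have "pderiv g = 0"
    proof (rule ccontr)
      assume "pderiv g \<noteq> 0"
      hence "degree g \<le> degree (pderiv g)" using gd dvd_imp_degree_le by blast
      moreover have "degree (pderiv g) \<le> degree g - 1" by (rule degree_pderiv_le)
      ultimately show False using dg by simp
    qed
    then obtain h where h: "g = h ^ CHAR('a)" using pderiv_zero_power by blast
    have p2: "CHAR('a) \<ge> 2" using CHAR_prime_ff prime_ge_2_nat by blast
    have "h ^ 2 dvd g" unfolding h using p2 by (rule le_imp_power_dvd)
    hence "h ^ 2 dvd f" using gf by (rule dvd_trans)
    hence "is_unit h" using sf squarefreeD by blast
    hence "is_unit g" unfolding h using is_unit_power_iff[of h "CHAR('a)"] by blast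
    with gu show False by simp
  qed
qed



theorem lemma4p2:
  fixes lam :: "nat multiset" and m :: nat
  assumes "m \<ge> 2"
    and "is_partition lam m"
    and "(S_set lam :: ('a::{finite,field}) poly set) \<noteq> {}"
  shows "real (card (D_set lam :: 'a set)) \<ge>
           (real (card (UNIV :: 'a set)) - 1) / real (gcd (card (UNIV :: 'a set) - 1) (m * (m - 1)))"
proof -
  obtain f :: "'a poly" where f: "f \<in> S_set lam" using assms(3) by blast
  have fm: "monic f" and fd: "degree f = m" and fsq: "squarefree f"
    using f assms(2) unfolding S_set_def is_partition_def by auto
  have f0: "f \<noteq> 0" using fm by auto
  have "resultant_sub m (m - 1) f (pderiv f) \<noteq> 0"
  proof (rule resultant_sub_nonzero[OF fd])
    show "m > 0" using assms(1) by simp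
    show "degree (pderiv f) \<le> m - 1" using degree_pderiv_le[of f] fd by simp
    show "coprime f (pderiv f)" by (rule squarefree_coprime_pderiv[OF fsq f0])
  qed
  hence d0: "disc f \<noteq> 0" using fm fd by (simp add: disc_def Let_def)
  let ?k = "m * (m - 1)"
  let ?H = "UNIV - {0::'a}"
  let ?I = "(\<lambda>c. c ^ ?k) ` ?H"
  have sub: "(\<lambda>y. y * disc f) ` ?I \<subseteq> D_set lam"
  proof (rule image_subsetI)
    fix y assume "y \<in> ?I"
    then obtain c where c: "c \<noteq> 0" "y = c ^ ?k" by auto
    have "y * disc f = disc (sc c f)" using disc_sc[OF c(1) fd assms(1) fm] c(2) by simp
    moreover have "sc c f \<in> S_set lam" by (rule sc_S_set[OF c(1) f])
    ultimately show "y * disc f \<in> D_set lam" unfolding D_set_def by blast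
  qed
  have inj: "inj_on (\<lambda>y. y * disc f) ?I" using d0 by (auto simp: inj_on_def)
  have cI: "card ?I \<le> card (D_set lam :: 'a set)"
    using card_inj_on_le[OF inj sub] by simp
  have cp: "card (UNIV::'a set) - 1 \<le> card ?I * gcd (card (UNIV::'a set) - 1) ?k"
    by (rule card_powers)
  have "card (UNIV::'a set) \<ge> card {0::'a, 1}" by (rule card_mono) auto
  hence q2: "card (UNIV::'a set) \<ge> 2" by simp
  hence g0: "gcd (card (UNIV::'a set) - 1) ?k > 0" by simp
  have "real (card (UNIV::'a set)) - 1 = real (card (UNIV::'a set) - 1)" using q2 by simp
  also have "\<dots> \<le> real (card ?I) * real (gcd (card (UNIV::'a set) - 1) ?k)"
    using cp by (metis of_nat_le_iff of_nat_mult)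
  finally have "(real (card (UNIV::'a set)) - 1) / real (gcd (card (UNIV::'a set) - 1) ?k) \<le> real (card ?I)"
    using g0 by (simp add: divide_le_eq)
  also have "\<dots> \<le> real (card (D_set lam :: 'a set))" using cI by simp
  finally show ?thesis .
qed


end
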